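(* Let $m\ge 9$, $T=A_m$, $G\in\{A_m,S_m\}$, and let $H=(S_k\wr S_r)\cap G$ with $m=kr$ and $1<k<m$ be a maximal imprimitive subgroup of $G$. Consider $G$ acting on $\Omega$, the set of partitions of $\{1,\dots,m\}$ into $r$ subsets each of size $k$, so $n=\frac{(kr)!}{(k!)^r r!}$. Then $\mathrm{ifix}(T)>n^{1/2}$.
   Context: $\mathrm{ifix}(T)=\max\{\mathrm{fix}(t): t\in T \text{ an involution}\}$, where $\mathrm{fix}(t)$ is the number of points of $\Omega$ fixed by $t$. *)

theory Defs
  imports Complex_Main "HOL-Algebra.Sym_Groups" "HOL-Library.Disjoint_Sets"
begin

definition uniform_partitions :: "nat \<Rightarrow> nat \<Rightarrow> nat \<Rightarrow> nat set set set" where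
  "uniform_partitions m k r =
     {P. partition_on {1..m} P \<and> card P = r \<and> (\<forall>B\<in>P. card B = k)}"

definition act_part :: "(nat \<Rightarrow> nat) \<Rightarrow> nat set set \<Rightarrow> nat set set" where
  "act_part p P = (\<lambda>B. p ` B) ` P"

definition fix_count :: "nat set set set \<Rightarrow> (nat \<Rightarrow> nat) \<Rightarrow> nat" where
  "fix_count \<Omega> t = card {P \<in> \<Omega>. act_part t P = P}"

definition is_involution :: "(nat \<Rightarrow> nat) \<Rightarrow> bool" where
  "is_involution t \<longleftrightarrow> t \<noteq> id \<and> t \<circ> t = id"

definition ifix :: "(nat \<Rightarrow> nat) set \<Rightarrow> nat set set set \<Rightarrow> nat" where
  "ifix T \<Omega> = Max {fix_count \<Omega> t | t. t \<in> T \<and> is_involution t}"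

definition maximal_subgroup :: "'a set \<Rightarrow> ('a, 'b) monoid_scheme \<Rightarrow> bool" where
  "maximal_subgroup H G \<longleftrightarrow> subgroup H G \<and> H \<noteq> carrier G \<and>
     (\<forall>K. subgroup K G \<and> H \<subseteq> K \<longrightarrow> K = H \<or> K = carrier G)"

end

theory Submission
  imports Defs "HOL.Binomial_Plus"
begin

definition U :: "nat set \<Rightarrow> nat \<Rightarrow> nat set set set" where
  "U D k = {P. partition_on D P \<and> (\<forall>B\<in>P. card B = k)}"

function NN :: "nat \<Rightarrow> nat \<Rightarrow> nat" where
  "NN k n = (if n = 0 \<or> k = 0 then 1 else if n < k then 0
             else ((n - 1) choose (k - 1)) * NN k (n - k))"
  by auto
termination by (relation "measure snd") auto

declare NN.simps[simp del]

lemma U_empty: "U {} k = {{}}"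
  by (auto simp: U_def partition_on_empty)

lemma finite_U: "finite D \<Longrightarrow> finite (U D k)"
  by (rule finite_subset[of _ "{P. partition_on D P}"]) (auto simp: U_def finitely_many_partition_on)

lemma insert_in_U:
  assumes "X \<subseteq> D" "card X = k" "X \<noteq> {}" "Q \<in> U (D - X) k"
  shows "insert X Q \<in> U D k"
proof -
  have pq: "partition_on (D - X) Q" using assms(4) by (simp add: U_def)
  have "disjnt X (\<Union>Q)" using partition_onD1[OF pq] by (auto simp: disjnt_def)
  then have "partition_on D (insert X Q)"
    using partition_on_insert[of X Q D] pq assms by auto
  then show ?thesis using assms by (auto simp: U_def)
qed

lemma insert_notin:
  assumes "X \<noteq> {}" "Q \<in> U E k" "X \<inter> E = {}"
  shows "X \<notin> Q"
  using assms partition_onD1[of E Q] by (auto simp: U_def)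

lemma decomp_card:
  assumes fin: "finite D" and x: "x \<in> D" and k: "k > 0"
    and AA: "\<AA> \<subseteq> {A. A \<subseteq> D - {x} \<and> card A = k - 1}"
    and G: "\<And>A. A \<in> \<AA> \<Longrightarrow> G A \<subseteq> U (D - insert x A) k"
  shows "(\<Union>A\<in>\<AA>. insert (insert x A) ` G A) \<subseteq> U D k"
    and "card (\<Union>A\<in>\<AA>. insert (insert x A) ` G A) = (\<Sum>A\<in>\<AA>. card (G A))"
proof -
  have finA: "finite A" if "A \<in> \<AA>" for A using that AA fin by (auto intro: finite_subset)
  have cardX: "card (insert x A) = k" if "A \<in> \<AA>" for A
  proof -
    have "x \<notin> A" "card A = k - 1" using that AA by auto
    then show ?thesis using finA[OF that] k by simp
  qed
  show "(\<Union>A\<in>\<AA>. insert (insert x A) ` G A) \<subseteq> U D k"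
  proof
    fix P assume "P \<in> (\<Union>A\<in>\<AA>. insert (insert x A) ` G A)"
    then obtain A Q where A: "A \<in> \<AA>" and Q: "Q \<in> G A" and P: "P = insert (insert x A) Q" by auto
    show "P \<in> U D k" unfolding P
      using insert_in_U[of "insert x A" D k Q] A Q G AA x cardX[OF A] by auto
  qed
  have finAA: "finite \<AA>"
    by (rule finite_subset[OF AA]) (use fin in auto)
  have inj: "inj_on (insert (insert x A)) (G A)" if "A \<in> \<AA>" for A
  proof (rule inj_onI)
    fix Q1 Q2 assume q: "Q1 \<in> G A" "Q2 \<in> G A" "insert (insert x A) Q1 = insert (insert x A) Q2"
    have "insert x A \<notin> Q1" "insert x A \<notin> Q2"
      using insert_notin[of "insert x A" _ "D - insert x A" k] q G[OF that] by auto
    then show "Q1 = Q2" using q(3)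
      by (metis insert_ident)
  qed
  have blk: "insert x A = insert x A'" if "A \<in> \<AA>" "A' \<in> \<AA>" "insert (insert x A) Q = insert (insert x A') Q'"
      "Q \<in> G A" "Q' \<in> G A'" for A A' Q Q'
  proof -
    have "insert x A \<in> insert (insert x A') Q'" using that(3) by blast
    moreover have "x \<notin> \<Union>Q'" using G[OF that(2)] that(5) partition_onD1[of "D - insert x A'" Q']
      by (auto simp: U_def)
    ultimately show ?thesis by auto
  qed
  have xA: "x \<notin> A" if "A \<in> \<AA>" for A using that AA by auto
  show "card (\<Union>A\<in>\<AA>. insert (insert x A) ` G A) = (\<Sum>A\<in>\<AA>. card (G A))"
  proof (subst card_UN_disjoint)
    show "finite \<AA>" by fact
    show "\<forall>A\<in>\<AA>. finite (insert (insert x A) ` G A)"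
      using G finite_U[of "D - _" k] fin by (meson finite_Diff finite_imageI finite_subset)
    show "\<forall>A\<in>\<AA>. \<forall>A'\<in>\<AA>. A \<noteq> A' \<longrightarrow> insert (insert x A) ` G A \<inter> insert (insert x A') ` G A' = {}"
    proof (intro ballI impI)
      fix A A' assume a: "A \<in> \<AA>" "A' \<in> \<AA>" "A \<noteq> A'"
      have "insert x A \<noteq> insert x A'" using a xA
        by (metis insert_ident)
      then show "insert (insert x A) ` G A \<inter> insert (insert x A') ` G A' = {}"
        using blk[OF a(1,2)] by blast
    qed
    show "(\<Sum>A\<in>\<AA>. card (insert (insert x A) ` G A)) = (\<Sum>A\<in>\<AA>. card (G A))"
      by (rule sum.cong) (auto intro: card_image inj)
  qed
qed

lemma decomp_full:
  assumes fin: "finite D" and x: "x \<in> D" and k: "k > 0"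
  shows "U D k \<subseteq> (\<Union>A\<in>{A. A \<subseteq> D - {x} \<and> card A = k - 1}. insert (insert x A) ` U (D - insert x A) k)"
proof
  fix P assume P: "P \<in> U D k"
  have pp: "partition_on D P" and cb: "\<forall>B\<in>P. card B = k" using P by (auto simp: U_def)
  obtain X where X: "X \<in> P" "x \<in> X" using partition_onD1[OF pp] x by auto
  have XD: "X \<subseteq> D" using partition_onD1[OF pp] X by auto
  define A where "A = X - {x}"
  have XA: "X = insert x A" using X A_def by auto
  have finX: "finite X" using XD fin finite_subset by auto
  have cA: "card A = k - 1" using cb X finX by (simp add: A_def)
  have disj: "disjnt X (\<Union>(P - {X}))"
    using partition_onD2[OF pp] X by (auto simp: disjnt_def disjoint_def)
  have "partition_on D (insert X (P - {X}))" using pp X by (simp add: insert_absorb)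
  then have "partition_on (D - X) (P - {X})" using partition_on_insert[OF disj] by auto
  then have "P - {X} \<in> U (D - insert x A) k" using cb XA by (auto simp: U_def)
  moreover have "P = insert (insert x A) (P - {X})" using X XA by auto
  moreover have "A \<subseteq> D - {x}" using XD A_def by auto
  ultimately show "P \<in> (\<Union>A\<in>{A. A \<subseteq> D - {x} \<and> card A = k - 1}. insert (insert x A) ` U (D - insert x A) k)"
    using cA by blast
qed

lemma card_U: "finite D \<Longrightarrow> k > 0 \<Longrightarrow> card (U D k) = NN k (card D)"
proof (induction "card D" arbitrary: D rule: less_induct)
  case less
  show ?case
  proof (cases "D = {}")
    case True then show ?thesis by (subst NN.simps) (simp add: U_empty)
  next
    case False
    then obtain x where x: "x \<in> D" by auto
    note Dne = False
    have cpos: "card D > 0" using False less.prems by auto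
    show ?thesis
    proof (cases "card D < k")
      case True
      have "U D k = {}"
      proof (rule ccontr)
        assume "U D k \<noteq> {}"
        then obtain P where P: "P \<in> U D k" by auto
        then have pp: "partition_on D P" "\<forall>B\<in>P. card B = k" by (auto simp: U_def)
        obtain X where "X \<in> P" "x \<in> X" using partition_onD1[OF pp(1)] x by auto
        then have XD: "X \<subseteq> D" and cX: "card X = k" using pp partition_onD1[OF pp(1)] by auto
        show False using card_mono[OF less.prems(1) XD] True cX by linarith
      qed
      then show ?thesis using True cpos by (subst NN.simps) simp
    next
      case False
      define AA where "AA = {A. A \<subseteq> D - {x} \<and> card A = k - 1}"
      have eq: "U D k = (\<Union>A\<in>AA. insert (insert x A) ` U (D - insert x A) k)"
      proof (rule equalityI)
        show "U D k \<subseteq> (\<Union>A\<in>AA. insert (insert x A) ` U (D - insert x A) k)"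
          using decomp_full[OF less.prems(1) x less.prems(2)] unfolding AA_def .
        show "(\<Union>A\<in>AA. insert (insert x A) ` U (D - insert x A) k) \<subseteq> U D k"
          by (rule decomp_card(1)[OF less.prems(1) x less.prems(2)]) (auto simp: AA_def)
      qed
      have cA: "card (D - insert x A) = card D - k" if "A \<in> AA" for A
      proof -
        have "finite A" "x \<notin> A" "card A = k - 1" "insert x A \<subseteq> D"
          using that less.prems(1) x by (auto simp: AA_def intro: finite_subset)
        then show ?thesis using less.prems by (simp add: card_Diff_subset)
      qed
      have "card (U D k) = (\<Sum>A\<in>AA. card (U (D - insert x A) k))"
        unfolding eq by (rule decomp_card(2)[OF less.prems(1) x less.prems(2)]) (auto simp: AA_def)
      also have "\<dots> = (\<Sum>A\<in>AA. NN k (card D - k))"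
      proof (rule sum.cong[OF refl])
        fix A assume A: "A \<in> AA"
        have "card (D - insert x A) < card D" using cA[OF A] less.prems cpos by simp
        then show "card (U (D - insert x A) k) = NN k (card D - k)"
          using less.hyps[of "D - insert x A"] less.prems cA[OF A] by simp
      qed
      also have "\<dots> = card AA * NN k (card D - k)" by simp
      also have "card AA = (card D - 1) choose (k - 1)"
        unfolding AA_def using n_subsets[of "D - {x}" "k - 1"] less.prems x by simp
      finally show ?thesis using False Dne cpos less.prems by (subst NN.simps) simp
    qed
  qed
qed


lemma card_subsets_containing:
  assumes "finite E" "y \<in> E" "j > 0"
  shows "card {A. A \<subseteq> E \<and> card A = j \<and> y \<in> A} = card (E - {y}) choose (j - 1)"
proof -
  have eq: "{A. A \<subseteq> E \<and> card A = j \<and> y \<in> A} = insert y ` {A. A \<subseteq> E - {y} \<and> card A = j - 1}"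
  proof (rule equalityI)
    show "{A. A \<subseteq> E \<and> card A = j \<and> y \<in> A} \<subseteq> insert y ` {A. A \<subseteq> E - {y} \<and> card A = j - 1}"
    proof
      fix A assume A: "A \<in> {A. A \<subseteq> E \<and> card A = j \<and> y \<in> A}"
      then have "finite A" using assms(1) finite_subset by auto
      then have "A - {y} \<in> {A. A \<subseteq> E - {y} \<and> card A = j - 1}" "A = insert y (A - {y})"
        using A by auto
      then show "A \<in> insert y ` {A. A \<subseteq> E - {y} \<and> card A = j - 1}" by blast
    qed
    show "insert y ` {A. A \<subseteq> E - {y} \<and> card A = j - 1} \<subseteq> {A. A \<subseteq> E \<and> card A = j \<and> y \<in> A}"
    proof
      fix A assume "A \<in> insert y ` {A. A \<subseteq> E - {y} \<and> card A = j - 1}"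
      then obtain A' where A': "A' \<subseteq> E - {y}" "card A' = j - 1" "A = insert y A'" by auto
      then have "finite A'" using assms(1) finite_subset by blast
      moreover have "y \<notin> A'" using A' by auto
      ultimately have "card A = j" using A' assms by simp
      then show "A \<in> {A. A \<subseteq> E \<and> card A = j \<and> y \<in> A}" using A' assms by auto
    qed
  qed
  have inj: "inj_on (insert y) {A. A \<subseteq> E - {y} \<and> card A = j - 1}"
    by (rule inj_onI) (metis (no_types, lifting) Diff_insert_absorb mem_Collect_eq subset_Diff_insert)
  show ?thesis unfolding eq card_image[OF inj] using n_subsets[of "E - {y}" "j - 1"] assms by simp
qed

definition fam :: "nat set \<Rightarrow> nat \<Rightarrow> nat \<Rightarrow> nat set set \<Rightarrow> (nat set \<Rightarrow> nat) \<Rightarrow> (nat set \<Rightarrow> nat) \<Rightarrow> nat set set set" where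
  "fam D k x AA z w = (\<Union>A\<in>AA. insert (insert x A) `
      (\<Union>C\<in>{C. C \<subseteq> D - insert x A - {z A} \<and> card C = k - 1 \<and> w A \<in> C}.
          insert (insert (z A) C) ` U (D - insert x A - insert (z A) C) k))"

lemma fam_props:
  assumes fin: "finite D" and x: "x \<in> D" and k: "k \<ge> 2" and n: "card D = n"
    and AA: "AA \<subseteq> {A. A \<subseteq> D - {x} \<and> card A = k - 1}"
    and zw: "\<And>A. A \<in> AA \<Longrightarrow> z A \<in> D - insert x A \<and> w A \<in> D - insert x A \<and> w A \<noteq> z A"
  shows "fam D k x AA z w \<subseteq> U D k"
    and "card (fam D k x AA z w) = card AA * (((n - k - 2) choose (k - 2)) * NN k (n - 2 * k))"
proof -
  define inner where "inner A = (\<Union>C\<in>{C. C \<subseteq> D - insert x A - {z A} \<and> card C = k - 1 \<and> w A \<in> C}.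
          insert (insert (z A) C) ` U (D - insert x A - insert (z A) C) k)" for A
  have k0: "k > 0" using k by simp
  have cD': "card (D - insert x A) = n - k" if "A \<in> AA" for A
  proof -
    have "finite A" "x \<notin> A" "card A = k - 1" "insert x A \<subseteq> D"
      using that AA fin x by (auto intro: finite_subset)
    then show ?thesis using n k by (simp add: card_Diff_subset)
  qed
  have inner: "inner A \<subseteq> U (D - insert x A) k \<and>
      card (inner A) = ((n - k - 2) choose (k - 2)) * NN k (n - 2 * k)" if A: "A \<in> AA" for A
  proof -
    let ?D' = "D - insert x A"
    let ?CC = "{C. C \<subseteq> ?D' - {z A} \<and> card C = k - 1 \<and> w A \<in> C}"
    have f': "finite ?D'" using fin by simp
    have z': "z A \<in> ?D'" using zw[OF A] by simp
    have CC: "?CC \<subseteq> {C. C \<subseteq> ?D' - {z A} \<and> card C = k - 1}" by auto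
    have sub: "inner A \<subseteq> U ?D' k"
      unfolding inner_def by (rule decomp_card(1)[OF f' z' k0 CC]) auto
    have "card (inner A) = (\<Sum>C\<in>?CC. card (U (?D' - insert (z A) C) k))"
      unfolding inner_def by (rule decomp_card(2)[OF f' z' k0 CC]) auto
    also have "\<dots> = (\<Sum>C\<in>?CC. NN k (n - 2 * k))"
    proof (rule sum.cong[OF refl])
      fix C assume C: "C \<in> ?CC"
      have "finite C" "z A \<notin> C" "card C = k - 1" "insert (z A) C \<subseteq> ?D'"
        using C z' f' by (auto intro: finite_subset)
      then have "card (?D' - insert (z A) C) = n - 2 * k"
        using cD'[OF A] k by (simp add: card_Diff_subset)
      then show "card (U (?D' - insert (z A) C) k) = NN k (n - 2 * k)"
        using card_U[of "?D' - insert (z A) C" k] fin k by simp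
    qed
    also have "\<dots> = card ?CC * NN k (n - 2 * k)" by simp
    also have "card ?CC = (n - k - 2) choose (k - 2)"
    proof -
      have "card ?CC = card (?D' - {z A} - {w A}) choose (k - 1 - 1)"
        by (rule card_subsets_containing) (use f' zw[OF A] k in auto)
      moreover have "card (?D' - {z A} - {w A}) = n - k - 2"
        using cD'[OF A] zw[OF A] f' by (simp add: card_Diff_singleton)
      ultimately show ?thesis by (simp add: numeral_2_eq_2)
    qed
    finally show ?thesis using sub by simp
  qed
  have famdef: "fam D k x AA z w = (\<Union>A\<in>AA. insert (insert x A) ` inner A)"
    unfolding fam_def inner_def ..
  show "fam D k x AA z w \<subseteq> U D k"
    unfolding famdef by (rule decomp_card(1)[OF fin x k0 AA]) (use inner in auto)
  have "card (fam D k x AA z w) = (\<Sum>A\<in>AA. card (inner A))"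
    unfolding famdef by (rule decomp_card(2)[OF fin x k0 AA]) (use inner in auto)
  also have "\<dots> = (\<Sum>A\<in>AA. ((n - k - 2) choose (k - 2)) * NN k (n - 2 * k))"
    by (rule sum.cong) (use inner in auto)
  finally show "card (fam D k x AA z w) = card AA * (((n - k - 2) choose (k - 2)) * NN k (n - 2 * k))"
    by simp
qed


definition tt :: "nat \<Rightarrow> nat" where "tt = transpose 1 2 \<circ> transpose 3 4"

lemma tt_vals: "tt 1 = 2" "tt 2 = 1" "tt 3 = 4" "tt 4 = 3"
  "x \<notin> {1,2,3,4} \<Longrightarrow> tt x = x"
  by (auto simp: tt_def transpose_def)

lemma tt_inv: "tt \<circ> tt = id"
  by (auto simp: tt_def transpose_def fun_eq_iff)

lemma tt_invol: "is_involution tt"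
proof -
  have "tt \<noteq> id"
  proof
    assume "tt = id"
    then have "tt 1 = 1" by simp
    then show False using tt_vals(1) by simp
  qed
  then show ?thesis using tt_inv unfolding is_involution_def by simp
qed

lemma tt_alt: "m \<ge> 4 \<Longrightarrow> tt \<in> carrier (alt_group m)"
proof -
  assume m: "m \<ge> 4"
  have p1: "transpose 1 2 permutes {1..m}" "transpose 3 4 permutes {1..m}"
    using m by (auto intro!: permutes_swap_id)
  have "tt permutes {1..m}" unfolding tt_def by (rule permutes_compose[OF p1(2) p1(1)])
  moreover have "evenperm tt"
  proof -
    have pp: "permutation (transpose (1::nat) 2)" "permutation (transpose (3::nat) 4)"
      by (rule permutation_swap_id)+
    have "evenperm (transpose (1::nat) 2) = evenperm (transpose (3::nat) 4)"
      by (simp only: evenperm_swap) simp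
    then show ?thesis unfolding tt_def using evenperm_comp[OF pp] by simp
  qed
  ultimately show ?thesis by (simp add: alt_group_def sym_group_def)
qed

lemma closed_image:
  assumes "f \<circ> f = id" "\<And>x. x \<in> S \<Longrightarrow> f x \<in> S"
  shows "f ` S = S"
proof
  show "f ` S \<subseteq> S" using assms(2) by auto
  show "S \<subseteq> f ` S"
  proof
    fix x assume "x \<in> S"
    then have "f (f x) = x" "f x \<in> S" using assms by (auto simp: fun_eq_iff)
    then show "x \<in> f ` S" by (metis image_eqI)
  qed
qed

lemma tt_block:
  assumes "1 \<in> B \<longleftrightarrow> 2 \<in> B" "3 \<in> B \<longleftrightarrow> 4 \<in> B"
  shows "tt ` B = B"
proof (rule closed_image[OF tt_inv])
  fix x assume x: "x \<in> B"
  show "tt x \<in> B"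
  proof (cases "x \<in> {1,2,3,4}")
    case True then show ?thesis using x assms tt_vals by auto
  next
    case False then show ?thesis using x tt_vals by auto
  qed
qed

lemma act_inv: "(\<lambda>B. tt ` B) \<circ> (\<lambda>B. tt ` B) = id"
  using tt_inv by (auto simp: fun_eq_iff image_comp)

lemma act_fixed:
  assumes "\<And>B. B \<in> P \<Longrightarrow> tt ` B \<in> P"
  shows "act_part tt P = P"
  unfolding act_part_def by (rule closed_image[OF act_inv]) (use assms in auto)

lemma omega_eq:
  assumes "m = k * r" "k > 0"
  shows "uniform_partitions m k r = U {1..m} k"
proof (rule equalityI)
  show "uniform_partitions m k r \<subseteq> U {1..m} k"
    by (auto simp: uniform_partitions_def U_def)
  show "U {1..m} k \<subseteq> uniform_partitions m k r"
  proof
    fix P assume P: "P \<in> U {1..m} k"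
    then have pp: "partition_on {1..m} P" and cb: "\<forall>B\<in>P. card B = k" by (auto simp: U_def)
    have fb: "\<And>B. B \<in> P \<Longrightarrow> finite B" using partition_onD1[OF pp]
      by (metis Union_upper finite_atLeastAtMost finite_subset)
    have "card {1..m} = (\<Sum>B\<in>P. card B)" by (rule product_partition[OF pp fb])
    also have "\<dots> = card P * k" using cb by simp
    finally have "k * r = card P * k" using assms by simp
    then have "card P = r" using assms by simp
    then show "P \<in> uniform_partitions m k r" using pp cb by (auto simp: uniform_partitions_def)
  qed
qed

lemma NN_pos: "k > 0 \<Longrightarrow> NN k (k * j) > 0"
proof (induction j)
  case 0 then show ?case by (subst NN.simps) simp
next
  case (Suc j)
  then show ?case by (subst NN.simps) simp
qed

lemma fam_elem:
  assumes "P \<in> fam D k x AA z w"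
  obtains A C Q where "A \<in> AA" "C \<subseteq> D - insert x A - {z A}" "w A \<in> C" "card C = k - 1"
    "Q \<in> U (D - insert x A - insert (z A) C) k"
    "P = insert (insert x A) (insert (insert (z A) C) Q)"
  using assms unfolding fam_def by blast

lemma U_block: "Q \<in> U E k \<Longrightarrow> B \<in> Q \<Longrightarrow> B \<subseteq> E"
  unfolding U_def using partition_onD1 by blast

lemma fam3_fixed:
  assumes "P \<in> fam D k 1 {A. A \<subseteq> D - {1} \<and> card A = k - 1 \<and> 2 \<in> A \<and> 3 \<notin> A \<and> 4 \<notin> A} (\<lambda>_. 3) (\<lambda>_. 4)"
  shows "act_part tt P = P"
proof -
  obtain A C Q where A: "A \<in> {A. A \<subseteq> D - {1} \<and> card A = k - 1 \<and> 2 \<in> A \<and> 3 \<notin> A \<and> 4 \<notin> A}"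
    and C: "C \<subseteq> D - insert 1 A - {3}" "4 \<in> C" "card C = k - 1"
    and Q: "Q \<in> U (D - insert 1 A - insert 3 C) k"
    and P: "P = insert (insert 1 A) (insert (insert 3 C) Q)"
    by (rule fam_elem[OF assms])
  have "tt ` B = B" if "B \<in> P" for B
  proof -
    have "B = insert 1 A \<or> B = insert 3 C \<or> B \<in> Q" using that P by auto
    moreover have "tt ` (insert 1 A) = insert 1 A" by (rule tt_block) (use A in auto)
    moreover have "tt ` (insert 3 C) = insert 3 C" by (rule tt_block) (use A C in auto)
    moreover have "tt ` B = B" if "B \<in> Q"
    proof -
      have "B \<subseteq> D - insert 1 A - insert 3 C" using U_block[OF Q that] .
      then show ?thesis by (intro tt_block) (use A C in auto)
    qed
    ultimately show ?thesis by blast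
  qed
  then show ?thesis by (intro act_fixed) auto
qed

definition z2 :: "nat set \<Rightarrow> nat" where "z2 A = (if A = {2} then 3 else 2)"
definition w2 :: "nat set \<Rightarrow> nat" where "w2 A = (if A = {4} then 3 else 4)"

lemma fam2_fixed:
  assumes "P \<in> fam D 2 1 {{2},{3},{4}} z2 w2"
  shows "act_part tt P = P"
proof -
  obtain A C Q where A: "A \<in> {{2},{3},{4}}"
    and C: "C \<subseteq> D - insert 1 A - {z2 A}" "w2 A \<in> C" "card C = 2 - 1"
    and Q: "Q \<in> U (D - insert 1 A - insert (z2 A) C) 2"
    and P: "P = insert (insert 1 A) (insert (insert (z2 A) C) Q)"
    by (rule fam_elem[OF assms])
  have Qf: "tt ` B = B" if "B \<in> Q" for B
  proof -
    have sub: "B \<subseteq> D - insert 1 A - insert (z2 A) C" using U_block[OF Q that] .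
    have "1 \<notin> B" "2 \<notin> B" "3 \<notin> B" "4 \<notin> B"
      using sub A C by (auto simp: z2_def w2_def)
    then show ?thesis by (intro tt_block) auto
  qed
  have "tt ` B \<in> P" if "B \<in> P" for B
  proof -
    have "B = insert 1 A \<or> B = insert (z2 A) C \<or> B \<in> Q" using that P by auto
    moreover have "tt ` (insert 1 A) \<in> P \<and> tt ` (insert (z2 A) C) \<in> P"
    proof -
      have Cw: "C = {w2 A}" using C by (auto simp: card_Suc_eq)
      have "A = {2} \<or> A = {3} \<or> A = {4}" using A by auto
      then show ?thesis
      proof (elim disjE)
        assume a: "A = {2}"
        then show ?thesis using P Cw tt_vals by (auto simp: z2_def w2_def)
      next
        assume a: "A = {3}"
        then show ?thesis using P Cw tt_vals by (auto simp: z2_def w2_def insert_commute)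
      next
        assume a: "A = {4}"
        then show ?thesis using P Cw tt_vals by (auto simp: z2_def w2_def insert_commute)
      qed
    qed
    ultimately show ?thesis using Qf that by auto
  qed
  then show ?thesis by (intro act_fixed) auto
qed


lemma chain3:
  fixes a b c p q s C1 C2 C3 X :: nat
  assumes "a * C1 = p * C2" "b * C2 = q * C3" "c * C3 = s * X"
  shows "a * b * c * C1 = p * q * s * X"
proof -
  have "a * b * c * C1 = b * c * (a * C1)" by (simp add: ac_simps)
  also have "\<dots> = p * c * (b * C2)" unfolding assms(1) by (simp add: ac_simps)
  also have "\<dots> = p * q * (c * C3)" unfolding assms(2) by (simp add: ac_simps)
  also have "\<dots> = p * q * s * X" unfolding assms(3) by (simp add: ac_simps)
  finally show ?thesis .
qed

lemma ident1:
  assumes "k \<ge> 2" "m \<ge> k + 3"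
  shows "(k-1)*(m-k)*(m-k-1)*((m-1) choose (k-1)) = (m-1)*(m-2)*(m-3)*((m-4) choose (k-2))"
proof -
  have e0: "Suc (k-2) = k-1" "m-1-1 = m-2" using assms by auto
  have a1: "(k-1) * ((m-1) choose (k-1)) = (m-1) * ((m-2) choose (k-2))"
    using binomial_absorption[of "k-2" "m-1"] unfolding e0 .
  have e: "m-2-(k-2) = m-k" "m-2-1 = m-3" "m-3-(k-2) = m-k-1" "m-3-1 = m-4" using assms by auto
  have a2: "(m-k) * ((m-2) choose (k-2)) = (m-2) * ((m-3) choose (k-2))"
    using binomial_absorb_comp[of "m-2" "k-2"] unfolding e .
  have a3: "(m-k-1) * ((m-3) choose (k-2)) = (m-3) * ((m-4) choose (k-2))"
    using binomial_absorb_comp[of "m-3" "k-2"] unfolding e .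
  show ?thesis using chain3[OF a1 a2 a3] .
qed

lemma ident2:
  assumes "k \<ge> 2" "m \<ge> 2 * k"
  shows "(k-1) * ((m-k-1) choose (k-1)) = (m-k-1) * ((m-k-2) choose (k-2))"
proof -
  have e0: "Suc (k-2) = k-1" "m-k-1-1 = m-k-2" using assms by auto
  show ?thesis using binomial_absorption[of "k-2" "m-k-1"] unfolding e0 .
qed

lemma poly1: "(m::nat) \<ge> 9 \<Longrightarrow> 4*(m-1)*(m-2)*(m-3) < 9*m*((m-4)*(m-5))"
proof -
  assume "m \<ge> 9"
  then obtain j where j: "m = j + 9" by (metis add.commute le_add_diff_inverse)
  show ?thesis unfolding j by (simp add: algebra_simps)
qed

lemma poly2: "(m::nat) \<ge> 9 \<Longrightarrow> (m-1)*(m-2)*(m-3) < 4*((m-4)*(m-5))*(m-3)"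
proof -
  assume "m \<ge> 9"
  then obtain j where j: "m = j + 9" by (metis add.commute le_add_diff_inverse)
  show ?thesis unfolding j by (simp add: algebra_simps)
qed

lemma poly3: "(m::nat) \<ge> 10 \<Longrightarrow> (m-1)*(m-3) < 9*((m-5)*(m-7))"
proof -
  assume "m \<ge> 10"
  then obtain j where j: "m = j + 10" by (metis add.commute le_add_diff_inverse)
  show ?thesis unfolding j by (simp add: algebra_simps)
qed


lemma key_abs:
  fixes m K M X Y :: nat
  assumes "m \<ge> 9" "9 \<le> K" "m \<le> 2 * M" "(m-4)*(m-5) \<le> 2 * X" "1 \<le> Y"
  shows "(m-1)*(m-2)*(m-3) < X * Y * K * M"
proof -
  have "4*((m-1)*(m-2)*(m-3)) < 9*m*((m-4)*(m-5))" using poly1[OF assms(1)] by simp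
  also have "\<dots> \<le> K * (2*M) * (2 * X)"
    by (intro mult_le_mono assms)
  also have "\<dots> \<le> K * (2*M) * (2 * X) * Y"
    using assms(5) by (metis mult.right_neutral mult_le_mono2)
  also have "\<dots> = 4 * (X * Y * K * M)" by (simp add: ac_simps)
  finally show ?thesis by linarith
qed

lemma key3:
  assumes "m \<ge> 9" "k \<ge> 3" "m \<ge> 2 * k"
  shows "(m-1)*(m-2)*(m-3) < ((m-4) choose (k-2)) * ((m-k-2) choose (k-2)) * (k-1)^2 * (m-k)"
proof (cases "k = 3")
  case True
  have e1: "(m-4) choose (k-2) = m - 4" using True by simp
  have e2: "(m-k-2) choose (k-2) = m - 5" using True by simp
  have e3: "(k-1)^2 = 4" using True by simp
  have e4: "m - k = m - 3" using True by simp
  have e5: "4*((m-4)*(m-5))*(m-3) = (m - 4) * (m - 5) * 4 * (m - 3)"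
    by (simp only: mult.commute mult.left_commute mult.assoc)
  show ?thesis unfolding e1 e2 e3 unfolding e4 using poly2[OF assms(1)] e5 by linarith
next
  case False
  then have k4: "k \<ge> 4" using assms by simp
  have X: "(m-4)*(m-5) \<le> 2 * ((m-4) choose (k-2))"
  proof -
    have "(m-4) choose 2 \<le> (m-4) choose (k-2)"
      by (rule binomial_mono) (use k4 assms in auto)
    moreover have "2 * ((m-4) choose 2) = (m-4)*(m-5)"
    proof -
      have "Suc 1 * ((m-4) choose Suc 1) = (m-4) * ((m-4-1) choose 1)" by (rule binomial_absorption)
      then show ?thesis by (simp add: numeral_2_eq_2)
    qed
    ultimately show ?thesis by linarith
  qed
  have Y: "1 \<le> (m-k-2) choose (k-2)"
  proof -
    have "k - 2 \<le> m - k - 2" using assms by linarith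
    then have "0 < (m-k-2) choose (k-2)" by (rule zero_less_binomial)
    then show ?thesis by linarith
  qed
  have K: "9 \<le> (k-1)^2"
  proof -
    have "3 \<le> k - 1" using k4 by linarith
    then have "3*3 \<le> (k-1)*(k-1)" using mult_le_mono by blast
    then show ?thesis by (simp add: power2_eq_square)
  qed
  have M: "m \<le> 2 * (m-k)" using assms by simp
  show ?thesis by (rule key_abs[OF assms(1) K M X Y])
qed

lemma arith3:
  assumes "m \<ge> 9" "k \<ge> 3" "m = k * r" "r \<ge> 2"
  shows "NN k m < (((m-4) choose (k-2)) * (((m - k - 2) choose (k-2)) * NN k (m - 2 * k)))^2"
proof -
  define X where "X = (m-4) choose (k-2)"
  define Y where "Y = (m-k-2) choose (k-2)"
  define C1 where "C1 = (m-1) choose (k-1)"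
  define C2 where "C2 = (m-k-1) choose (k-1)"
  define n0 where "n0 = NN k (m - 2 * k)"
  have m2k: "m \<ge> 2 * k" using assms by (metis mult.commute mult_le_mono2)
  have n0: "n0 \<ge> 1"
  proof -
    have "m - 2 * k = k * (r - 2)" using assms by (simp add: algebra_simps diff_mult_distrib2)
    then show ?thesis using NN_pos[of k "r-2"] assms unfolding n0_def by simp
  qed
  have NNm: "NN k m = C1 * (C2 * n0)"
  proof -
    have mk: "\<not> m - k < k" "m \<noteq> 0" "\<not> m < k" using m2k assms(1) by linarith+
    have "NN k m = C1 * NN k (m - k)" unfolding C1_def using mk assms by (subst NN.simps) simp
    moreover have "NN k (m - k) = C2 * n0" unfolding C2_def n0_def using assms mk
      by (subst NN.simps) (simp add: diff_diff_left mult_2)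
    ultimately show ?thesis by simp
  qed
  have i1: "(k-1)*(m-k)*(m-k-1)*C1 = (m-1)*(m-2)*(m-3)*X"
    unfolding C1_def X_def by (rule ident1) (use m2k assms(1,2) in linarith)+
  have i2: "(k-1) * C2 = (m-k-1) * Y"
    unfolding C2_def Y_def by (rule ident2) (use m2k assms(1,2) in linarith)+
  have key: "(m-1)*(m-2)*(m-3) < X * Y * (k-1)^2 * (m-k)"
    unfolding X_def Y_def by (rule key3) (use m2k assms(1,2) in linarith)+
  define Z where "Z = (k-1)^2 * (m-k) * (m-k-1)"
  have mk1: "m - k - 1 > 0" using m2k assms(1,2) by linarith
  have Zpos: "Z > 0"
  proof -
    have "k - 1 > 0" "m - k > 0" "m - k - 1 > 0" using m2k assms(1,2) by linarith+
    then show ?thesis unfolding Z_def by simp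
  qed
  have XYpos: "X * Y > 0" using key by (metis gr0I mult_is_0 zero_less_iff_neq_zero not_less0)
  have "C1 * C2 * Z = ((k-1)*(m-k)*(m-k-1)*C1) * ((k-1) * C2)" unfolding Z_def by (simp add: power2_eq_square ac_simps)
  also have "\<dots> = (X * Y) * ((m-1)*(m-2)*(m-3) * (m-k-1))" unfolding i1 i2 by (simp add: ac_simps)
  also have "\<dots> < (X * Y) * ((X * Y * (k-1)^2 * (m-k)) * (m-k-1))"
    using key XYpos mk1 by simp
  also have "\<dots> = (X * Y)^2 * Z" unfolding Z_def by (simp add: power2_eq_square ac_simps)
  finally have "C1 * C2 < (X * Y)^2" using Zpos by simp
  then have "C1 * C2 * n0 < (X * Y)^2 * n0" using n0 by simp
  also have "\<dots> \<le> (X * Y)^2 * n0^2" using n0 by (simp add: power2_eq_square)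
  finally show ?thesis unfolding NNm X_def[symmetric] Y_def[symmetric] n0_def[symmetric]
    by (simp add: power_mult_distrib ac_simps)
qed

lemma NN_step: "k > 0 \<Longrightarrow> n \<ge> k \<Longrightarrow> NN k n = ((n-1) choose (k-1)) * NN k (n-k)"
  by (subst NN.simps) simp

lemma NN2: "n \<ge> 2 \<Longrightarrow> NN 2 n = (n-1) * NN 2 (n-2)"
  using NN_step[of 2 n] by simp

lemma arith2:
  assumes "m \<ge> 10" "m = 2 * r"
  shows "NN 2 m < (3 * (1 * NN 2 (m - 4)))^2"
proof -
  have r5: "r \<ge> 5" using assms by linarith
  have m8: "m - 8 = 2 * (r - 4)" using assms by simp
  have n1: "NN 2 (m - 8) \<ge> 1" unfolding m8 using NN_pos[of 2 "r-4"] by simp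
  have e1: "NN 2 m = (m-1)*((m-3)*NN 2 (m-4))"
    using NN2[of m] NN2[of "m-2"] assms(1) by (simp add: numeral_eq_Suc)
  have e2: "NN 2 (m-4) = (m-5)*((m-7)*NN 2 (m-8))"
    using NN2[of "m-4"] NN2[of "m-6"] assms(1) by (simp add: numeral_eq_Suc)
  have N4: "(m-5)*(m-7) \<le> NN 2 (m-4)" using e2 n1 by simp
  have "0 < (m-5)*(m-7)" using assms(1) by simp
  then have pos: "NN 2 (m-4) > 0" using N4 by linarith
  have "NN 2 m = NN 2 (m-4) * ((m-1)*(m-3))" using e1 by simp
  also have "\<dots> < NN 2 (m-4) * (9 * ((m-5)*(m-7)))" using poly3[OF assms(1)] pos by simp
  also have "\<dots> \<le> NN 2 (m-4) * (9 * NN 2 (m-4))" using N4 by simp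
  finally show ?thesis by (simp add: power2_eq_square)
qed


theorem proposition2p5:
  fixes m k r :: nat and G :: "(nat \<Rightarrow> nat) monoid" and P0 :: "nat set set"
    and H :: "(nat \<Rightarrow> nat) set"
  assumes "m \<ge> 9"
    and "m = k * r" and "1 < k" and "k < m"
    and "G = alt_group m \<or> G = sym_group m"
    and "P0 \<in> uniform_partitions m k r"
    and "H = {p \<in> carrier G. act_part p P0 = P0}"
    and "maximal_subgroup H G"
  shows "real (ifix (carrier (alt_group m)) (uniform_partitions m k r))
           > sqrt (real (card (uniform_partitions m k r)))"
proof -
  define \<Omega> where "\<Omega> = uniform_partitions m k r"
  define D where "D = {1..m::nat}"
  have k0: "k > 0" using assms(3) by simp
  have r2: "r \<ge> 2"
  proof (rule ccontr)
    assume "\<not> r \<ge> 2"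
    then have "r \<le> 1" by simp
    then have "k * r \<le> k" by (metis mult.right_neutral mult_le_mono2)
    then show False using assms(2,4) by simp
  qed
  have Oeq: "\<Omega> = U D k" unfolding \<Omega>_def D_def by (rule omega_eq[OF assms(2) k0])
  have finO: "finite \<Omega>" unfolding Oeq D_def by (rule finite_U) simp
  have cardO: "card \<Omega> = NN k m" unfolding Oeq D_def using card_U[of "{1..m}" k] k0 by simp
  have finT: "finite (carrier (alt_group m))"
    by (rule finite_subset[OF _ finite_permutations[of "{1..m}"]]) (auto simp: alt_group_def sym_group_def)
  have fixle: "card F \<le> ifix (carrier (alt_group m)) \<Omega>"
    if F: "F \<subseteq> \<Omega>" "\<And>P. P \<in> F \<Longrightarrow> act_part tt P = P" for F
  proof -
    have "F \<subseteq> {P \<in> \<Omega>. act_part tt P = P}" using F by auto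
    then have "card F \<le> fix_count \<Omega> tt" unfolding fix_count_def
      by (rule card_mono[rotated]) (use finO in auto)
    also have "fix_count \<Omega> tt \<le> ifix (carrier (alt_group m)) \<Omega>"
    proof -
      have eq: "{fix_count \<Omega> t | t. t \<in> carrier (alt_group m) \<and> is_involution t}
          = fix_count \<Omega> ` {t \<in> carrier (alt_group m). is_involution t}" by auto
      have "tt \<in> {t \<in> carrier (alt_group m). is_involution t}"
        using tt_alt[of m] tt_invol assms(1) by simp
      then show ?thesis unfolding ifix_def eq
        by (intro Max_ge finite_imageI) (use finT in auto)
    qed
    finally show ?thesis .
  qed
  obtain F where F: "F \<subseteq> \<Omega>" "\<And>P. P \<in> F \<Longrightarrow> act_part tt P = P" "NN k m < (card F)^2"
  proof (cases "k = 2")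
    case True
    define F where "F = fam D 2 1 {{2},{3},{4}} z2 w2"
    have AA: "{{2},{3},{4}} \<subseteq> {A. A \<subseteq> D - {1} \<and> card A = 2 - 1}"
      using assms(1) unfolding D_def by auto
    have zw: "z2 A \<in> D - insert 1 A \<and> w2 A \<in> D - insert 1 A \<and> w2 A \<noteq> z2 A"
      if "A \<in> {{2},{3},{4}}" for A
      using that assms(1) unfolding D_def z2_def w2_def by auto
    have finD: "finite D" and oD: "1 \<in> D" and cD: "card D = m" using assms(1) unfolding D_def by auto
    have fp: "F \<subseteq> U D 2" "card F = card {{2::nat},{3},{4}} * (((m - 2 - 2) choose (2 - 2)) * NN 2 (m - 2 * 2))"
      unfolding F_def using fam_props[OF finD oD _ cD AA zw] by auto
    have c3: "card {{2::nat},{3},{4}} = 3" by simp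
    have cF: "card F = 3 * (1 * NN 2 (m - 4))" using fp(2) c3 by simp
    have m2r: "m = 2 * r" using assms(2) True by simp
    have m10: "m \<ge> 10" using assms(1) m2r by presburger
    show ?thesis
    proof (rule that)
      show "F \<subseteq> \<Omega>" using fp Oeq True by simp
      show "\<And>P. P \<in> F \<Longrightarrow> act_part tt P = P" unfolding F_def by (rule fam2_fixed)
      show "NN k m < (card F)^2" unfolding cF True using arith2[OF m10 m2r] by simp
    qed
  next
    case False
    then have k3: "k \<ge> 3" using assms(3) by simp

    define AA where "AA = {A. A \<subseteq> D - {1} \<and> card A = k - 1 \<and> 2 \<in> A \<and> 3 \<notin> A \<and> 4 \<notin> A}"
    define F where "F = fam D k 1 AA (\<lambda>_. 3) (\<lambda>_. 4)"
    have AAs: "AA \<subseteq> {A. A \<subseteq> D - {1} \<and> card A = k - 1}" unfolding AA_def by auto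
    have zw: "(\<lambda>_. 3) A \<in> D - insert 1 A \<and> (\<lambda>_. 4) A \<in> D - insert 1 A \<and> (\<lambda>_. 4::nat) A \<noteq> (\<lambda>_. 3) A"
      if "A \<in> AA" for A
      using that assms(1) unfolding D_def AA_def by auto
    have finD: "finite D" and oD: "1 \<in> D" and cD: "card D = m" using assms(1) unfolding D_def by auto
    have k2: "k \<ge> 2" using k3 by simp
    have fp: "F \<subseteq> U D k" "card F = card AA * (((m - k - 2) choose (k - 2)) * NN k (m - 2 * k))"
      unfolding F_def using fam_props[OF finD oD k2 cD AAs zw] by auto
    have cAA: "card AA = (m - 4) choose (k - 2)"
    proof -
      have "AA = {A. A \<subseteq> D - {1,3,4} \<and> card A = k - 1 \<and> 2 \<in> A}" unfolding AA_def by auto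
      also have "card \<dots> = card (D - {1,3,4} - {2}) choose (k - 1 - 1)"
        by (rule card_subsets_containing) (use assms(1) k3 in \<open>auto simp: D_def\<close>)
      also have "card (D - {1,3,4} - {2}) = m - 4"
      proof -
        have "D - {1,3,4} - {2} = D - {1,2,3,4}" by auto
        moreover have "card (D - {1,2,3,4}) = m - 4"
          using assms(1) by (subst card_Diff_subset) (auto simp: D_def)
        ultimately show ?thesis by simp
      qed
      finally show ?thesis by (simp add: numeral_2_eq_2)
    qed
    show ?thesis
    proof (rule that)
      show "F \<subseteq> \<Omega>" using fp Oeq by simp
      show "\<And>P. P \<in> F \<Longrightarrow> act_part tt P = P" unfolding F_def AA_def by (rule fam3_fixed)
      show "NN k m < (card F)^2" unfolding fp(2) cAA using arith3[OF assms(1) k3 assms(2) r2] .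
    qed
  qed
  have le: "card F \<le> ifix (carrier (alt_group m)) \<Omega>" using fixle[OF F(1,2)] by blast
  have "sqrt (real (card \<Omega>)) < sqrt (real ((card F)^2))"
    using F(3) cardO by (intro real_sqrt_less_mono) linarith
  also have "\<dots> = real (card F)" by (simp add: of_nat_power)
  also have "\<dots> \<le> real (ifix (carrier (alt_group m)) \<Omega>)" using le by simp
  finally show ?thesis unfolding \<Omega>_def .
qed

end
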